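(* Let $\rho$ be an $n$-qubit density matrix, let $P^{(1)},\dots,P^{(L)}\in\{I,X,Y,Z\}^n$ be Pauli operators with $w_l=\mathrm{Tr}(P^{(l)}\rho)$, and let $\beta$ be a probability distribution on $\mathcal{P}^n$ with $\zeta(P^{(l)},\beta)>0$ for all $l$ (e.g. the distribution given by a decision diagram compatible with these operators). Draw $B^{(1)},\dots,B^{(M)}$ i.i.d. from $\beta$ and measure a fresh copy of $\rho$ in each basis $B^{(m)}$. Let $M_l=\sum_{m=1}^M\mathbbm{1}_{\mathrm{Lift}(P^{(l)})}(B^{(m)})$ and $\hat w_l=\frac1{M_l}\sum_{m:\,B^{(m)}\in\mathrm{Lift}(P^{(l)})}\mu(B^{(m)},\mathrm{supp}(P^{(l)}))$ (with $\hat w_l=0$ if $M_l=0$). Fix $\epsilon\in(0,1)$, $\delta\in(0,1)$, set $\eta=1-e^{-\epsilon^2/2}$, and let $\mathrm{INCONF}_\epsilon(\mathbf{B})=\Pr\big[\max_{1\le l\le L}|\hat w_l-w_l|\ge\epsilon \,\big|\, B^{(1)},\dots,B^{(M)}\big]$ (probability over measurement outcomes given the bases). Then \[ \mathbb{E}_{\mathbf{B}}\big(\mathrm{INCONF}_\epsilon(\mathbf{B})\big)\le 2\sum_{l=1}^L\big(1-\eta\,\zeta(P^{(l)},\beta)\big)^M\le 2\sum_{l=1}^L e^{-\eta\,\zeta(P^{(l)},\beta)\,M}, \] and consequently $\mathbb{E}_{\mathbf{B}}(\mathrm{INCONF}_\epsilon(\mathbf{B}))\le\delta$ whenever $M\g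e\frac{\ln(2L/\delta)}{\eta}\max_{l}\frac{1}{\zeta(P^{(l)},\beta)}$.
   Context: $I,X,Y,Z$ are Pauli matrices, $\mathcal{P}=\{X,Y,Z\}$, $\mathrm{supp}(P)=\{i:P_i\neq I\}$, $\mathrm{Lift}(P)=\{B\in\mathcal{P}^n: B_i=P_i\ \forall i\in\mathrm{supp}(P)\}$, $\zeta(P,\beta)=\sum_{B\in\mathrm{Lift}(P)}\beta(B)$. Measuring $\rho$ in basis $B\in\mathcal{P}^n$ means measuring each qubit $i$ in the eigenbasis of $B_i$, giving $\mu(B,i)\in\{\pm1\}$ with joint law $\Pr[\mu(B,i)=s_i\,\forall i]=\mathrm{Tr}(\rho\bigotimes_i\frac{I+s_iB_i}{2})$; $\mu(B,A)=\prod_{i\in A}\mu(B,i)$, $\mu(B,\varnothing)=1$. Measurement outcomes for different $m$ are independent given the bases. *)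

theory Defs
  imports "Jordan_Normal_Form.Schur_Decomposition" "HOL-Probability.Probability"
begin

datatype pauli = PI | PX | PY | PZ

definition pauli_mat :: "pauli \<Rightarrow> complex mat" where
  "pauli_mat p = (case p of
      PI \<Rightarrow> 1\<^sub>m 2
    | PX \<Rightarrow> Matrix.mat 2 2 (\<lambda>(r,c). if r \<noteq> c then 1 else 0)
    | PY \<Rightarrow> Matrix.mat 2 2 (\<lambda>(r,c). if r = 0 \<and> c = 1 then - \<i> else if r = 1 \<and> c = 0 then \<i> else 0)
    | PZ \<Rightarrow> Matrix.mat 2 2 (\<lambda>(r,c). if r = c then (if r = 0 then 1 else -1) else 0))"

(* n-fold tensor product of 2x2 matrices F 0, ..., F (n-1); qubit i corresponds to bit i
   of the row/column index. *)
definition ptensor :: "nat \<Rightarrow> (nat \<Rightarrow> complex mat) \<Rightarrow> complex mat" where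
  "ptensor n F = Matrix.mat (2^n) (2^n)
     (\<lambda>(r,c). \<Prod>i<n. F i $$ (r div 2^i mod 2, c div 2^i mod 2))"

definition pauli_op :: "pauli list \<Rightarrow> complex mat" where
  "pauli_op P = ptensor (length P) (\<lambda>i. pauli_mat (P ! i))"

definition mtrace :: "complex mat \<Rightarrow> complex" where
  "mtrace A = (\<Sum>i<dim_row A. A $$ (i,i))"

definition density_matrix :: "nat \<Rightarrow> complex mat \<Rightarrow> bool" where
  "density_matrix n \<rho> \<longleftrightarrow> \<rho> \<in> carrier_mat (2^n) (2^n) \<and> mat_adjoint \<rho> = \<rho> \<and>
     (\<forall>v \<in> carrier_vec (2^n). 0 \<le> Re (conjugate v \<bullet> (\<rho> *\<^sub>v v))) \<and> mtrace \<rho> = 1"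

definition bases :: "nat \<Rightarrow> pauli list set" where
  "bases n = {B. length B = n \<and> set B \<subseteq> {PX, PY, PZ}}"

definition supp :: "pauli list \<Rightarrow> nat set" where
  "supp P = {i. i < length P \<and> P ! i \<noteq> PI}"

definition Lift :: "pauli list \<Rightarrow> pauli list set" where
  "Lift P = {B \<in> bases (length P). \<forall>i \<in> supp P. B ! i = P ! i}"

definition zeta :: "pauli list \<Rightarrow> pauli list pmf \<Rightarrow> real" where
  "zeta P \<beta> = (\<Sum>B\<in>Lift P. pmf \<beta> B)"

definition outcomes :: "nat \<Rightarrow> int list set" where
  "outcomes n = {s. length s = n \<and> set s \<subseteq> {-1, 1}}"

(* Pr[mu(B,i) = s_i for all i] = Tr(rho \<otimes>_i (I + s_i B_i)/2) *)
definition outcome_prob :: "complex mat \<Rightarrow> pauli list \<Rightarrow> int list \<Rightarrow> real" where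
  "outcome_prob \<rho> B s = Re (mtrace (\<rho> * ptensor (length B)
      (\<lambda>i. (1/2 :: complex) \<cdot>\<^sub>m (1\<^sub>m 2 + of_int (s ! i) \<cdot>\<^sub>m pauli_mat (B ! i)))))"

(* mu(B,A) = prod_{i in A} mu(B,i), given the outcome vector s of measuring in B *)
definition mu :: "int list \<Rightarrow> nat set \<Rightarrow> real" where
  "mu s A = (\<Prod>i\<in>A. real_of_int (s ! i))"

definition lift_count :: "nat \<Rightarrow> (nat \<Rightarrow> pauli list) \<Rightarrow> pauli list \<Rightarrow> nat" where
  "lift_count M Bs P = card {m \<in> {..<M}. Bs m \<in> Lift P}"

definition w_hat :: "nat \<Rightarrow> (nat \<Rightarrow> pauli list) \<Rightarrow> (nat \<Rightarrow> int list) \<Rightarrow> pauli list \<Rightarrow> real" where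
  "w_hat M Bs ss P = (if lift_count M Bs P = 0 then 0
      else (1 / real (lift_count M Bs P)) *
           (\<Sum>m\<in>{m \<in> {..<M}. Bs m \<in> Lift P}. mu (ss m) (supp P)))"

definition INCONF :: "nat \<Rightarrow> complex mat \<Rightarrow> nat \<Rightarrow> (nat \<Rightarrow> pauli list) \<Rightarrow> real \<Rightarrow> nat \<Rightarrow> (nat \<Rightarrow> pauli list) \<Rightarrow> real" where
  "INCONF n \<rho> L Ps eps M Bs =
     (\<Sum>ss \<in> PiE {..<M} (\<lambda>_. outcomes n).
        (\<Prod>m<M. outcome_prob \<rho> (Bs m) (ss m)) *
        (if (MAX l\<in>{..<L}. cmod (complex_of_real (w_hat M Bs ss (Ps l)) - mtrace (pauli_op (Ps l) * \<rho>))) \<ge> eps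
         then 1 else 0))"

end

theory Submission
  imports Defs
begin


lemma finite_outcomes: "finite (outcomes n)"
proof -
  have "outcomes n \<subseteq> {xs. set xs \<subseteq> {-1,1} \<and> length xs = n}" by (auto simp: outcomes_def)
  then show ?thesis using finite_lists_length_eq[of "{-1,1::int}" n] by (rule finite_subset) simp
qed

lemma outcomes_Suc: "outcomes (Suc n) = (\<lambda>(s,t). s @ [t]) ` (outcomes n \<times> {-1,1})"
proof
  show "outcomes (Suc n) \<subseteq> (\<lambda>(s,t). s @ [t]) ` (outcomes n \<times> {-1,1})"
  proof
    fix xs assume xs: "xs \<in> outcomes (Suc n)"
    then obtain ys y where "xs = ys @ [y]" by (cases xs rule: rev_cases) (auto simp: outcomes_def)
    with xs show "xs \<in> (\<lambda>(s,t). s @ [t]) ` (outcomes n \<times> {-1,1})"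
      by (auto simp: outcomes_def image_iff)
  qed
qed (auto simp: outcomes_def)

lemma sum_outcomes_prod:
  fixes f :: "nat \<Rightarrow> int \<Rightarrow> 'a::comm_semiring_1"
  shows "(\<Sum>s\<in>outcomes n. \<Prod>i<n. f i (s!i)) = (\<Prod>i<n. f i (-1) + f i 1)"
proof (induction n)
  case 0
  have "outcomes 0 = {[]}" by (auto simp: outcomes_def)
  then show ?case by simp
next
  case (Suc n)
  have inj: "inj_on (\<lambda>(s,t). s @ [t]) (outcomes n \<times> {-1,1::int})" by (auto simp: inj_on_def)
  have "(\<Sum>s\<in>outcomes (Suc n). \<Prod>i<Suc n. f i (s!i))
      = (\<Sum>st\<in>outcomes n \<times> {-1,1}. \<Prod>i<Suc n. f i ((fst st @ [snd st])!i))"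
    unfolding outcomes_Suc by (subst sum.reindex[OF inj]) (simp add: case_prod_beta)
  also have "\<dots> = (\<Sum>st\<in>outcomes n \<times> {-1,1}. (\<Prod>i<n. f i (fst st!i)) * f n (snd st))"
  proof (intro sum.cong refl)
    fix st assume "st \<in> outcomes n \<times> {-1,1::int}"
    then have l: "length (fst st) = n" by (auto simp: outcomes_def)
    have "(\<Prod>i<n. f i ((fst st @ [snd st])!i)) = (\<Prod>i<n. f i (fst st!i))"
      by (intro prod.cong refl) (simp add: nth_append l)
    then show "(\<Prod>i<Suc n. f i ((fst st @ [snd st])!i)) = (\<Prod>i<n. f i (fst st!i)) * f n (snd st)"
      by (simp add: l nth_append)
  qed
  also have "\<dots> = (\<Sum>s\<in>outcomes n. \<Sum>t\<in>{-1,1}. (\<Prod>i<n. f i (s!i)) * f n t)"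
    by (subst sum.cartesian_product) (simp add: case_prod_beta)
  also have "\<dots> = (\<Sum>s\<in>outcomes n. \<Prod>i<n. f i (s!i)) * (f n (-1) + f n 1)"
    by (simp add: sum_distrib_right distrib_left)
  finally show ?case using Suc by simp
qed

lemma bits_eq:
  "c < 2^n \<Longrightarrow> r < 2^n \<Longrightarrow> (\<forall>i<n. c div 2^i mod 2 = r div 2^i mod 2) \<Longrightarrow> c = (r::nat)"
proof (induction n arbitrary: c r)
  case 0 thus ?case by simp
next
  case (Suc n)
  have "c div 2 = r div 2"
  proof (rule Suc.IH)
    show "c div 2 < 2^n" "r div 2 < 2^n" using Suc.prems by auto
    show "\<forall>i<n. c div 2 div 2^i mod 2 = r div 2 div 2^i mod 2"
    proof (intro allI impI)
      fix i assume "i < n"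
      then have "c div 2^(Suc i) mod 2 = r div 2^(Suc i) mod 2" using Suc.prems(3) by auto
      then show "c div 2 div 2^i mod 2 = r div 2 div 2^i mod 2" by (simp add: div_mult2_eq)
    qed
  qed
  moreover have "c mod 2 = r mod 2" using Suc.prems(3) by (metis div_by_1 power_0 zero_less_Suc)
  ultimately show ?case by (metis div_mult_mod_eq)
qed

lemma mtrace_mult:
  assumes "A \<in> carrier_mat N N" "B \<in> carrier_mat N N"
  shows "mtrace (A * B) = (\<Sum>r<N. \<Sum>c<N. A $$ (r,c) * B $$ (c,r))"
  using assms by (auto simp: mtrace_def scalar_prod_def atLeast0LessThan intro!: sum.cong)

lemma ptensor_index: "c < 2^n \<Longrightarrow> r < 2^n \<Longrightarrow>
   ptensor n F $$ (c,r) = (\<Prod>i<n. F i $$ (c div 2^i mod 2, r div 2^i mod 2))"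
  by (simp add: ptensor_def)

lemma ptensor_carrier: "ptensor n F \<in> carrier_mat (2^n) (2^n)" by (simp add: ptensor_def)

definition Ent :: "pauli \<Rightarrow> int \<Rightarrow> nat \<Rightarrow> nat \<Rightarrow> complex" where
 "Ent p t a b = (1/2) * ((if a = b then 1 else 0) + of_int t * pauli_mat p $$ (a,b))"

lemma pauli_mat_carrier: "pauli_mat p \<in> carrier_mat 2 2" by (cases p) (auto simp: pauli_mat_def)

lemma F_index: "a < 2 \<Longrightarrow> b < 2 \<Longrightarrow>
  ((1/2::complex) \<cdot>\<^sub>m (1\<^sub>m 2 + of_int t \<cdot>\<^sub>m pauli_mat p)) $$ (a,b) = Ent p t a b"
  using pauli_mat_carrier[of p] by (simp add: Ent_def)

lemma bit_lt2: "(c::nat) div 2^i mod 2 < 2" by simp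

lemma trace_expand:
  assumes "\<rho> \<in> carrier_mat (2^n) (2^n)" "length B = n"
  shows "mtrace (\<rho> * ptensor (length B) (\<lambda>i. (1/2::complex) \<cdot>\<^sub>m (1\<^sub>m 2 + of_int (s!i) \<cdot>\<^sub>m pauli_mat (B!i))))
     = (\<Sum>r<2^n. \<Sum>c<2^n. \<rho> $$ (r,c) * (\<Prod>i<n. Ent (B!i) (s!i) (c div 2^i mod 2) (r div 2^i mod 2)))"
  using assms by (simp add: mtrace_mult[OF assms(1) ptensor_carrier] ptensor_index F_index)

lemma sum_outcomes_trace:
  assumes "\<rho> \<in> carrier_mat (2^n) (2^n)" "length B = n"
  shows "(\<Sum>s\<in>outcomes n. mtrace (\<rho> * ptensor (length B) (\<lambda>i. (1/2::complex) \<cdot>\<^sub>m (1\<^sub>m 2 + of_int (s!i) \<cdot>\<^sub>m pauli_mat (B!i)))) * (\<Prod>i<n. g i (s!i)))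
     = (\<Sum>r<2^n. \<Sum>c<2^n. \<rho> $$ (r,c) * (\<Prod>i<n. Ent (B!i) (-1) (c div 2^i mod 2) (r div 2^i mod 2) * g i (-1)
            + Ent (B!i) 1 (c div 2^i mod 2) (r div 2^i mod 2) * g i 1))"
proof -
  have "(\<Sum>s\<in>outcomes n. mtrace (\<rho> * ptensor (length B) (\<lambda>i. (1/2::complex) \<cdot>\<^sub>m (1\<^sub>m 2 + of_int (s!i) \<cdot>\<^sub>m pauli_mat (B!i)))) * (\<Prod>i<n. g i (s!i)))
    = (\<Sum>s\<in>outcomes n. \<Sum>r<2^n. \<Sum>c<2^n. \<rho> $$ (r,c) * (\<Prod>i<n. Ent (B!i) (s!i) (c div 2^i mod 2) (r div 2^i mod 2) * g i (s!i)))"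
    by (simp add: trace_expand[OF assms] sum_distrib_right prod.distrib mult.assoc)
  also have "\<dots> = (\<Sum>r<2^n. \<Sum>c<2^n. \<rho> $$ (r,c) * (\<Sum>s\<in>outcomes n. \<Prod>i<n. Ent (B!i) (s!i) (c div 2^i mod 2) (r div 2^i mod 2) * g i (s!i)))"
    by (simp add: sum_distrib_left sum.swap[of _ "outcomes n"])
  also have "\<dots> = (\<Sum>r<2^n. \<Sum>c<2^n. \<rho> $$ (r,c) * (\<Prod>i<n. Ent (B!i) (-1) (c div 2^i mod 2) (r div 2^i mod 2) * g i (-1)
            + Ent (B!i) 1 (c div 2^i mod 2) (r div 2^i mod 2) * g i 1))"
  proof (intro sum.cong refl arg_cong2[where f="(*)"])
    fix r c
    show "(\<Sum>s\<in>outcomes n. \<Prod>i<n. Ent (B!i) (s!i) (c div 2^i mod 2) (r div 2^i mod 2) * g i (s!i))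
      = (\<Prod>i<n. Ent (B!i) (-1) (c div 2^i mod 2) (r div 2^i mod 2) * g i (-1)
            + Ent (B!i) 1 (c div 2^i mod 2) (r div 2^i mod 2) * g i 1)"
      by (rule sum_outcomes_prod[of "\<lambda>i t. Ent (B!i) t (c div 2^i mod 2) (r div 2^i mod 2) * g i t"])
  qed
  finally show ?thesis .
qed

lemma Ent_sum: "Ent p (-1) a b + Ent p 1 a b = (if a = b then 1 else 0)"
  by (simp add: Ent_def algebra_simps)

lemma Ent_diff: "Ent p (-1) a b * of_int (-1) + Ent p 1 a b * of_int 1 = pauli_mat p $$ (a,b)"
  by (simp add: Ent_def algebra_simps)

lemma prod_delta:
  fixes c r :: nat
  assumes "c < 2^n" "r < 2^n"
  shows "(\<Prod>i<n. if c div 2^i mod 2 = r div 2^i mod 2 then 1 else 0) = (if c = r then 1 else (0::complex))"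
proof (cases "c = r")
  case False
  then obtain i where "i < n" "c div 2^i mod 2 \<noteq> r div 2^i mod 2" using bits_eq[OF assms] by blast
  then have "(\<Prod>i<n. if c div 2^i mod 2 = r div 2^i mod 2 then 1 else 0) = (0::complex)"
    by (intro prod_zero) auto
  then show ?thesis using False by simp
qed simp

lemma sum_delta: "(\<Sum>r<N. \<Sum>c<N. (A::nat\<Rightarrow>nat\<Rightarrow>complex) r c * (if c = r then 1 else 0)) = (\<Sum>r<N. A r r)"
  by (simp add: if_distrib cong: if_cong)

lemma outcome_sum_one:
  assumes rho: "density_matrix n \<rho>" and B: "B \<in> bases n"
  shows "(\<Sum>s\<in>outcomes n. outcome_prob \<rho> B s) = 1"
proof -
  have c: "\<rho> \<in> carrier_mat (2^n) (2^n)" and tr: "mtrace \<rho> = 1" using rho by (auto simp: density_matrix_def)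
  have l: "length B = n" using B by (simp add: bases_def)
  have "(\<Sum>s\<in>outcomes n. mtrace (\<rho> * ptensor (length B) (\<lambda>i. (1/2::complex) \<cdot>\<^sub>m (1\<^sub>m 2 + of_int (s!i) \<cdot>\<^sub>m pauli_mat (B!i)))) * (\<Prod>i<n. (\<lambda>_ _. 1) i (s!i)))
     = (\<Sum>r<2^n. \<Sum>c<2^n. \<rho> $$ (r,c) * (\<Prod>i<n. Ent (B!i) (-1) (c div 2^i mod 2) (r div 2^i mod 2) * 1
            + Ent (B!i) 1 (c div 2^i mod 2) (r div 2^i mod 2) * 1))"
    by (rule sum_outcomes_trace[OF c l])
  also have "\<dots> = (\<Sum>r<2^n. \<Sum>c<2^n. \<rho> $$ (r,c) * (if c = r then 1 else 0))"
    by (intro sum.cong refl) (simp add: Ent_sum prod_delta)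
  also have "\<dots> = mtrace \<rho>" using c by (simp only: sum_delta) (simp add: mtrace_def)
  finally have "(\<Sum>s\<in>outcomes n. mtrace (\<rho> * ptensor (length B) (\<lambda>i. (1/2::complex) \<cdot>\<^sub>m (1\<^sub>m 2 + of_int (s!i) \<cdot>\<^sub>m pauli_mat (B!i))))) = 1"
    using tr by simp
  then have "Re (\<Sum>s\<in>outcomes n. mtrace (\<rho> * ptensor (length B) (\<lambda>i. (1/2::complex) \<cdot>\<^sub>m (1\<^sub>m 2 + of_int (s!i) \<cdot>\<^sub>m pauli_mat (B!i))))) = 1"
    by simp
  then show ?thesis by (simp add: outcome_prob_def)
qed

lemma less2_cases: "(a::nat) < 2 \<Longrightarrow> a = 0 \<or> a = 1" by auto

lemma supp_sub: "supp P \<subseteq> {..<length P}" by (auto simp: supp_def)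

lemma mu_prod: "complex_of_real (mu s (supp P)) =
   (\<Prod>i<length P. (\<lambda>i t. if i \<in> supp P then complex_of_int t else 1) i (s!i))"
proof -
  have "(\<Prod>i<length P. (\<lambda>i t. if i \<in> supp P then complex_of_int t else 1) i (s!i))
     = (\<Prod>i\<in>{..<length P} \<inter> supp P. complex_of_int (s!i))"
    by (subst prod.inter_restrict) auto
  also have "{..<length P} \<inter> supp P = supp P" using supp_sub by blast
  finally show ?thesis by (simp add: mu_def)
qed

lemma outcome_mu:
  assumes c: "\<rho> \<in> carrier_mat (2^n) (2^n)" and lP: "length P = n" and B: "B \<in> Lift P"
  shows "(\<Sum>s\<in>outcomes n. outcome_prob \<rho> B s * mu s (supp P)) = Re (mtrace (pauli_op P * \<rho>))"
proof -
  let ?g = "\<lambda>i t. if i \<in> supp P then complex_of_int t else 1"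
  have l: "length B = n" using B lP by (simp add: Lift_def bases_def)
  have Bi: "\<And>i. i \<in> supp P \<Longrightarrow> B!i = P!i" using B by (simp add: Lift_def)
  have PI: "\<And>i. i < n \<Longrightarrow> i \<notin> supp P \<Longrightarrow> P!i = PI" using lP by (auto simp: supp_def)
  have "(\<Sum>s\<in>outcomes n. mtrace (\<rho> * ptensor (length B) (\<lambda>i. (1/2::complex) \<cdot>\<^sub>m (1\<^sub>m 2 + of_int (s!i) \<cdot>\<^sub>m pauli_mat (B!i)))) * (\<Prod>i<n. ?g i (s!i)))
     = (\<Sum>r<2^n. \<Sum>c<2^n. \<rho> $$ (r,c) * (\<Prod>i<n. Ent (B!i) (-1) (c div 2^i mod 2) (r div 2^i mod 2) * ?g i (-1)
            + Ent (B!i) 1 (c div 2^i mod 2) (r div 2^i mod 2) * ?g i 1))"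
    by (rule sum_outcomes_trace[OF c l])
  also have "\<dots> = (\<Sum>r<2^n. \<Sum>c<2^n. \<rho> $$ (r,c) * pauli_op P $$ (c,r))"
  proof (intro sum.cong refl arg_cong2[where f="(*)"])
    fix r c :: nat assume r: "r \<in> {..<2^n}" and cc: "c \<in> {..<2^n}"
    have "(\<Prod>i<n. Ent (B!i) (-1) (c div 2^i mod 2) (r div 2^i mod 2) * ?g i (-1)
            + Ent (B!i) 1 (c div 2^i mod 2) (r div 2^i mod 2) * ?g i 1)
        = (\<Prod>i<n. pauli_mat (P!i) $$ (c div 2^i mod 2, r div 2^i mod 2))"
    proof (intro prod.cong refl)
      fix i assume i: "i \<in> {..<n}"
      show "Ent (B!i) (-1) (c div 2^i mod 2) (r div 2^i mod 2) * ?g i (-1)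
            + Ent (B!i) 1 (c div 2^i mod 2) (r div 2^i mod 2) * ?g i 1
          = pauli_mat (P!i) $$ (c div 2^i mod 2, r div 2^i mod 2)"
      proof (cases "i \<in> supp P")
        case True
        then show ?thesis using Ent_diff[of "B!i"] Bi[OF True] by simp
      next
        case False
        then show ?thesis using Ent_sum[of "B!i"] PI[of i] i by (simp add: pauli_mat_def)
      qed
    qed
    also have "\<dots> = pauli_op P $$ (c,r)" using r cc lP by (simp add: pauli_op_def ptensor_index)
    finally show "(\<Prod>i<n. Ent (B!i) (-1) (c div 2^i mod 2) (r div 2^i mod 2) * ?g i (-1)
            + Ent (B!i) 1 (c div 2^i mod 2) (r div 2^i mod 2) * ?g i 1) = pauli_op P $$ (c,r)" .
  qed
  also have "\<dots> = mtrace (pauli_op P * \<rho>)"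
  proof -
    have cP: "pauli_op P \<in> carrier_mat (2^n) (2^n)" using lP by (simp add: pauli_op_def ptensor_carrier)
    show ?thesis by (simp only: mtrace_mult[OF cP c]) (subst sum.swap, simp add: mult.commute)
  qed
  finally have eq: "(\<Sum>s\<in>outcomes n. mtrace (\<rho> * ptensor (length B) (\<lambda>i. (1/2::complex) \<cdot>\<^sub>m (1\<^sub>m 2 + of_int (s!i) \<cdot>\<^sub>m pauli_mat (B!i)))) * complex_of_real (mu s (supp P)))
       = mtrace (pauli_op P * \<rho>)"
    using lP by (simp add: mu_prod)
  have "(\<Sum>s\<in>outcomes n. outcome_prob \<rho> B s * mu s (supp P))
     = Re (\<Sum>s\<in>outcomes n. mtrace (\<rho> * ptensor (length B) (\<lambda>i. (1/2::complex) \<cdot>\<^sub>m (1\<^sub>m 2 + of_int (s!i) \<cdot>\<^sub>m pauli_mat (B!i)))) * complex_of_real (mu s (supp P)))"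
    by (simp add: outcome_prob_def Re_sum)
  then show ?thesis using eq by simp
qed

lemma pauli_herm: "a < 2 \<Longrightarrow> b < 2 \<Longrightarrow> cnj (pauli_mat p $$ (a,b)) = pauli_mat p $$ (b,a)"
  by (cases p; auto dest!: less2_cases simp: pauli_mat_def)

lemma rho_herm:
  assumes "density_matrix n \<rho>" "r < 2^n" "c < 2^n"
  shows "cnj (\<rho> $$ (r,c)) = \<rho> $$ (c,r)"
proof -
  have c: "\<rho> \<in> carrier_mat (2^n) (2^n)" and h: "mat_adjoint \<rho> = \<rho>" using assms by (auto simp: density_matrix_def)
  have "mat_adjoint \<rho> $$ (c,r) = cnj (\<rho> $$ (r,c))"
    using c assms(2,3) by (simp add: mat_adjoint_def mat_of_rows_index)
  then show ?thesis using h by simp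
qed

lemma trace_real:
  assumes rho: "density_matrix n \<rho>" and lP: "length P = n"
  shows "Im (mtrace (pauli_op P * \<rho>)) = 0"
proof -
  have c: "\<rho> \<in> carrier_mat (2^n) (2^n)" using rho by (auto simp: density_matrix_def)
  have cP: "pauli_op P \<in> carrier_mat (2^n) (2^n)" using lP by (simp add: pauli_op_def ptensor_carrier)
  have hP: "cnj (pauli_op P $$ (r,c)) = pauli_op P $$ (c,r)" if "r < 2^n" "c < 2^n" for r c
    using that lP by (simp add: pauli_op_def ptensor_index pauli_herm)
  have "cnj (mtrace (pauli_op P * \<rho>)) = (\<Sum>r<2^n. \<Sum>c<2^n. cnj (pauli_op P $$ (r,c)) * cnj (\<rho> $$ (c,r)))"
    by (simp add: mtrace_mult[OF cP c])
  also have "\<dots> = (\<Sum>r<2^n. \<Sum>c<2^n. pauli_op P $$ (c,r) * \<rho> $$ (r,c))"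
    by (intro sum.cong refl) (simp add: hP rho_herm[OF rho])
  also have "\<dots> = mtrace (pauli_op P * \<rho>)"
    by (simp only: mtrace_mult[OF cP c]) (rule sum.swap)
  finally show ?thesis by (auto simp: complex_eq_iff)
qed

definition uvec :: "pauli \<Rightarrow> int \<Rightarrow> nat \<Rightarrow> complex" where
 "uvec p t a = (case p of PZ \<Rightarrow> (if (a = 0) = (t = 1) then 1 else 0)
   | PX \<Rightarrow> (if a = 0 then 1 else of_int t) * of_real (sqrt (1/2))
   | PY \<Rightarrow> (if a = 0 then 1 else \<i> * of_int t) * of_real (sqrt (1/2))
   | PI \<Rightarrow> 0)"

lemma Ent_uvec:
  assumes "p \<noteq> PI" "t = -1 \<or> t = 1" "a < 2" "b < 2"
  shows "Ent p t a b = uvec p t a * cnj (uvec p t b)"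
proof -
  have h: "complex_of_real (sqrt (1/2)) * complex_of_real (sqrt (1/2)) = 1/2"
    by (simp flip: of_real_mult)
  have h2: "x * complex_of_real (sqrt (1/2)) * (y * complex_of_real (sqrt (1/2))) = x * y / 2" for x y
    using h by (simp add: algebra_simps)
  show ?thesis using assms
    by (cases p; auto dest!: less2_cases simp: Ent_def uvec_def pauli_mat_def h h2)
qed


lemma cnj_prod': "cnj (\<Prod>i\<in>A. f i) = (\<Prod>i\<in>A. cnj (f i))"
  by (induction A rule: infinite_finite_induct) auto

lemma outcome_nonneg:
  assumes rho: "density_matrix n \<rho>" and B: "B \<in> bases n" and s: "s \<in> outcomes n"
  shows "0 \<le> outcome_prob \<rho> B s"
proof -
  have c: "\<rho> \<in> carrier_mat (2^n) (2^n)" using rho by (auto simp: density_matrix_def)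
  have psd: "\<And>v. v \<in> carrier_vec (2^n) \<Longrightarrow> 0 \<le> Re (conjugate v \<bullet> (\<rho> *\<^sub>v v))"
    using rho by (auto simp: density_matrix_def)
  have l: "length B = n" using B by (simp add: bases_def)
  have Bi: "B!i \<noteq> PI" if "i < n" for i
  proof -
    have "B!i \<in> set B" using that l by simp
    then show ?thesis using B by (auto simp: bases_def)
  qed
  have si: "s!i = -1 \<or> s!i = 1" if "i < n" for i
  proof -
    have "s!i \<in> set s" using that s by (simp add: outcomes_def)
    then show ?thesis using s by (auto simp: outcomes_def)
  qed
  define v where "v c = (\<Prod>i<n. uvec (B!i) (s!i) (c div 2^i mod 2))" for c
  have "mtrace (\<rho> * ptensor (length B) (\<lambda>i. (1/2::complex) \<cdot>\<^sub>m (1\<^sub>m 2 + of_int (s!i) \<cdot>\<^sub>m pauli_mat (B!i))))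
     = (\<Sum>r<2^n. \<Sum>c<2^n. \<rho> $$ (r,c) * (\<Prod>i<n. Ent (B!i) (s!i) (c div 2^i mod 2) (r div 2^i mod 2)))"
    by (rule trace_expand[OF c l])
  also have "\<dots> = (\<Sum>r<2^n. \<Sum>c<2^n. \<rho> $$ (r,c) * (v c * cnj (v r)))"
  proof (intro sum.cong refl arg_cong2[where f="(*)"])
    fix r c :: nat
    have "(\<Prod>i<n. Ent (B!i) (s!i) (c div 2^i mod 2) (r div 2^i mod 2))
       = (\<Prod>i<n. uvec (B!i) (s!i) (c div 2^i mod 2) * cnj (uvec (B!i) (s!i) (r div 2^i mod 2)))"
      by (intro prod.cong refl Ent_uvec) (auto simp: Bi si)
    then show "(\<Prod>i<n. Ent (B!i) (s!i) (c div 2^i mod 2) (r div 2^i mod 2)) = v c * cnj (v r)"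
      by (simp add: v_def prod.distrib cnj_prod')
  qed
  also have "\<dots> = conjugate (Matrix.vec (2^n) v) \<bullet> (\<rho> *\<^sub>v Matrix.vec (2^n) v)"
    using c by (auto simp: scalar_prod_def atLeast0LessThan sum_distrib_left algebra_simps intro!: sum.cong)
  finally show ?thesis using psd[of "Matrix.vec (2^n) v"] by (simp add: outcome_prob_def)
qed

definition opdf :: "complex mat \<Rightarrow> nat \<Rightarrow> pauli list \<Rightarrow> int list \<Rightarrow> real" where
  "opdf \<rho> n B s = (if s \<in> outcomes n then outcome_prob \<rho> B s else 0)"

definition Dm :: "complex mat \<Rightarrow> nat \<Rightarrow> pauli list \<Rightarrow> int list pmf" where
  "Dm \<rho> n B = embed_pmf (opdf \<rho> n B)"

lemma pmf_Dm:
  assumes rho: "density_matrix n \<rho>" and B: "B \<in> bases n"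
  shows "pmf (Dm \<rho> n B) s = opdf \<rho> n B s"
  unfolding Dm_def
proof (rule pmf_embed_pmf)
  show "\<And>x. 0 \<le> opdf \<rho> n B x" using outcome_nonneg[OF rho B] by (simp add: opdf_def)
  have "(\<integral>\<^sup>+ x. ennreal (opdf \<rho> n B x) \<partial>count_space UNIV) = (\<Sum>x\<in>outcomes n. ennreal (opdf \<rho> n B x))"
    by (rule nn_integral_count_space') (auto simp: finite_outcomes opdf_def)
  also have "\<dots> = ennreal (\<Sum>x\<in>outcomes n. opdf \<rho> n B x)"
    using outcome_nonneg[OF rho B] by (intro sum_ennreal) (simp add: opdf_def)
  also have "(\<Sum>x\<in>outcomes n. opdf \<rho> n B x) = 1"
    using outcome_sum_one[OF rho B] by (simp add: opdf_def)
  finally show "(\<integral>\<^sup>+ x. ennreal (opdf \<rho> n B x) \<partial>count_space UNIV) = 1" by simp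
qed

lemma set_Dm:
  assumes rho: "density_matrix n \<rho>" and B: "B \<in> bases n"
  shows "set_pmf (Dm \<rho> n B) \<subseteq> outcomes n"
  using pmf_Dm[OF rho B] by (auto simp: set_pmf_iff opdf_def split: if_splits)

lemma expect_Dm:
  assumes rho: "density_matrix n \<rho>" and lP: "length P = n" and B: "B \<in> Lift P"
  shows "measure_pmf.expectation (Dm \<rho> n B) (\<lambda>s. mu s (supp P)) = Re (mtrace (pauli_op P * \<rho>))"
proof -
  have c: "\<rho> \<in> carrier_mat (2^n) (2^n)" using rho by (auto simp: density_matrix_def)
  have Bb: "B \<in> bases n" using B lP by (simp add: Lift_def)
  have "measure_pmf.expectation (Dm \<rho> n B) (\<lambda>s. mu s (supp P)) = (\<Sum>s\<in>outcomes n. pmf (Dm \<rho> n B) s *\<^sub>R mu s (supp P))"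
    by (rule integral_measure_pmf) (use set_Dm[OF rho Bb] in \<open>auto simp: finite_outcomes\<close>)
  also have "\<dots> = (\<Sum>s\<in>outcomes n. outcome_prob \<rho> B s * mu s (supp P))"
    by (intro sum.cong refl) (simp add: pmf_Dm[OF rho Bb] opdf_def)
  also have "\<dots> = Re (mtrace (pauli_op P * \<rho>))" by (rule outcome_mu[OF c lP B])
  finally show ?thesis .
qed

lemma mu_bound:
  assumes "s \<in> outcomes n" "length P = n"
  shows "mu s (supp P) \<in> {-1..1}"
proof -
  have "\<bar>mu s (supp P)\<bar> = (\<Prod>i\<in>supp P. \<bar>real_of_int (s!i)\<bar>)" by (simp add: mu_def abs_prod)
  also have "\<dots> = (\<Prod>i\<in>supp P. 1)"
  proof (intro prod.cong refl)
    fix i assume "i \<in> supp P"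
    then have "s!i \<in> set s" using assms by (auto simp: supp_def outcomes_def)
    then show "\<bar>real_of_int (s!i)\<bar> = 1" using assms by (auto simp: outcomes_def)
  qed
  finally show ?thesis by auto
qed

lemma set_Pi_Dm:
  fixes M :: nat and Bs :: "nat \<Rightarrow> pauli list"
  assumes rho: "density_matrix n \<rho>" and Bs: "\<forall>m<M. Bs m \<in> bases n"
  shows "set_pmf (Pi_pmf {..<M} undefined (\<lambda>m. Dm \<rho> n (Bs m))) \<subseteq> PiE {..<M} (\<lambda>_. outcomes n)"
proof
  fix ss assume "ss \<in> set_pmf (Pi_pmf {..<M} undefined (\<lambda>m. Dm \<rho> n (Bs m)))"
  then have "ss \<in> PiE_dflt {..<M} undefined (\<lambda>m. set_pmf (Dm \<rho> n (Bs m)))"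
    using set_Pi_pmf[of "{..<M}" undefined "\<lambda>m. Dm \<rho> n (Bs m)"] by (simp add: comp_def)
  then show "ss \<in> PiE {..<M} (\<lambda>_. outcomes n)"
    using set_Dm[OF rho] Bs by (auto simp: PiE_dflt_def PiE_def extensional_def)
qed


lemma hoeff_l:
  fixes M :: nat and Bs :: "nat \<Rightarrow> pauli list"
  assumes rho: "density_matrix n \<rho>" and Bs: "\<forall>m<M. Bs m \<in> bases n"
    and lP: "length P = n" and eps: "0 < eps"
  shows "measure_pmf.prob (Pi_pmf {..<M} undefined (\<lambda>m. Dm \<rho> n (Bs m)))
           {ss. eps \<le> cmod (complex_of_real (w_hat M Bs ss P) - mtrace (pauli_op P * \<rho>))}
         \<le> 2 * exp (- (eps\<^sup>2) / 2) ^ lift_count M Bs P"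
proof -
  define Q where "Q = Pi_pmf {..<M} undefined (\<lambda>m. Dm \<rho> n (Bs m))"
  define I where "I = {m \<in> {..<M}. Bs m \<in> Lift P}"
  define k where "k = card I"
  define w where "w = mtrace (pauli_op P * \<rho>)"
  have kl: "lift_count M Bs P = k" by (simp add: lift_count_def k_def I_def)
  have wr: "w = complex_of_real (Re w)"
    using trace_real[OF rho lP] by (simp add: w_def complex_eq_iff)
  have finI: "finite I" by (simp add: I_def)
  show ?thesis
  proof (cases "k = 0")
    case True
    have p1: "measure_pmf.prob Q {ss. eps \<le> cmod (complex_of_real (w_hat M Bs ss P) - w)} \<le> 1"
      by (rule measure_pmf.prob_le_1)
    have "measure_pmf.prob Q {ss. eps \<le> cmod (complex_of_real (w_hat M Bs ss P) - w)} \<le> 2 * exp (- (eps\<^sup>2) / 2) ^ 0"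
      by (rule order_trans[OF p1]) simp
    then show ?thesis using True kl by (simp only: Q_def w_def)
  next
    case False
    then have kpos: "0 < k" by simp
    define X where "X m ss = mu (ss m) (supp P)" for m and ss :: "nat \<Rightarrow> int list"
    have setQ: "set_pmf Q \<subseteq> PiE {..<M} (\<lambda>_. outcomes n)"
      unfolding Q_def by (rule set_Pi_Dm[OF rho Bs])
    have indep0: "prob_space.indep_vars (measure_pmf Q) (\<lambda>_. count_space UNIV) (\<lambda>x f. f x) {..<M}"
      unfolding Q_def by (rule indep_vars_Pi_pmf) simp
    have indep1: "prob_space.indep_vars (measure_pmf Q) (\<lambda>_. count_space UNIV) (\<lambda>x f. f x) I"
      by (rule prob_space.indep_vars_subset[OF _ indep0]) (auto simp: I_def prob_space_measure_pmf)
    have indep: "prob_space.indep_vars (measure_pmf Q) (\<lambda>_. borel) X I"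
      unfolding X_def
      by (rule prob_space.indep_vars_compose2[OF prob_space_measure_pmf indep1]) simp
    have EX: "measure_pmf.expectation Q (X m) = Re w" if m: "m \<in> I" for m
    proof -
      have "measure_pmf.expectation Q (X m) = measure_pmf.expectation (map_pmf (\<lambda>f. f m) Q) (\<lambda>s. mu s (supp P))"
        by (simp add: X_def[abs_def] integral_map_pmf)
      also have "map_pmf (\<lambda>f. f m) Q = Dm \<rho> n (Bs m)"
        using m unfolding Q_def I_def by (subst Pi_pmf_component) auto
      also have "measure_pmf.expectation (Dm \<rho> n (Bs m)) (\<lambda>s. mu s (supp P)) = Re w"
        using m unfolding w_def I_def by (intro expect_Dm[OF rho lP]) auto
      finally show ?thesis .
    qed
    interpret H: Hoeffding_ineq "measure_pmf Q" I X "\<lambda>_. -1" "\<lambda>_. 1" "\<Sum>i\<in>I. measure_pmf.expectation Q (X i)"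
    proof unfold_locales
      show "finite I" by (rule finI)
      show "prob_space.indep_vars (measure_pmf Q) (\<lambda>_. borel) X I" by (rule indep)
      fix i assume "i \<in> I"
      show "AE x in measure_pmf Q. X i x \<in> {- 1..1}"
      proof (rule AE_pmfI)
        fix ss assume "ss \<in> set_pmf Q"
        then have "ss i \<in> outcomes n" using setQ \<open>i \<in> I\<close> by (auto simp: I_def)
        then show "X i ss \<in> {- 1..1}" unfolding X_def by (rule mu_bound[OF _ lP])
      qed
    qed simp
    have mu_eq: "(\<Sum>i\<in>I. measure_pmf.expectation Q (X i)) = real k * Re w"
      by (simp add: EX k_def)
    have sq: "(\<Sum>i\<in>I. (1 - (-1::real))\<^sup>2) = 4 * real k" by (simp add: k_def)
    have "measure_pmf.prob Q {x\<in>space (measure_pmf Q). real k * eps \<le> \<bar>(\<Sum>i\<in>I. X i x) - real k * Re w\<bar>}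
        \<le> 2 * exp (-2 * (real k * eps)\<^sup>2 / (\<Sum>i\<in>I. (1 - (-1::real))\<^sup>2))"
      using H.Hoeffding_ineq_abs_ge[of "real k * eps"] kpos eps sq mu_eq by simp
    also have "-2 * (real k * eps)\<^sup>2 / (\<Sum>i\<in>I. (1 - (-1::real))\<^sup>2) = real k * (- (eps\<^sup>2) / 2)"
      using kpos by (simp add: sq power2_eq_square field_simps k_def[symmetric])
    also have "exp (real k * (- (eps\<^sup>2) / 2)) = exp (- (eps\<^sup>2) / 2) ^ k"
      by (rule exp_of_nat_mult)
    finally have hb: "measure_pmf.prob Q {x\<in>space (measure_pmf Q). real k * eps \<le> \<bar>(\<Sum>i\<in>I. X i x) - real k * Re w\<bar>}
        \<le> 2 * exp (- (eps\<^sup>2) / 2) ^ k" .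
    have sub: "{ss. eps \<le> cmod (complex_of_real (w_hat M Bs ss P) - w)}
        \<subseteq> {x\<in>space (measure_pmf Q). real k * eps \<le> \<bar>(\<Sum>i\<in>I. X i x) - real k * Re w\<bar>}"
    proof safe
      fix ss assume a: "eps \<le> cmod (complex_of_real (w_hat M Bs ss P) - w)"
      have wh: "w_hat M Bs ss P = (\<Sum>i\<in>I. X i ss) / real k"
        using kl kpos by (simp add: w_hat_def X_def I_def)
      have "cmod (complex_of_real (w_hat M Bs ss P) - w) = \<bar>w_hat M Bs ss P - Re w\<bar>"
        by (subst wr) (simp flip: of_real_diff)
      also have "\<dots> = \<bar>(\<Sum>i\<in>I. X i ss) - real k * Re w\<bar> / real k"
        using kpos by (simp add: wh field_simps abs_div_pos[symmetric]) 
      finally have "eps \<le> \<bar>(\<Sum>i\<in>I. X i ss) - real k * Re w\<bar> / real k" using a by simp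
      then show "real k * eps \<le> \<bar>(\<Sum>i\<in>I. X i ss) - real k * Re w\<bar>"
        using kpos by (simp add: field_simps)
    qed simp
    have "measure_pmf.prob Q {ss. eps \<le> cmod (complex_of_real (w_hat M Bs ss P) - w)}
        \<le> measure_pmf.prob Q {x\<in>space (measure_pmf Q). real k * eps \<le> \<bar>(\<Sum>i\<in>I. X i x) - real k * Re w\<bar>}"
      by (rule measure_pmf.finite_measure_mono[OF sub]) simp
    with hb show ?thesis using kl by (simp add: Q_def w_def)
  qed
qed

lemma max_indicator:
  fixes f :: "nat \<Rightarrow> real"
  assumes "0 < L"
  shows "(if eps \<le> (MAX l\<in>{..<L}. f l) then 1 else 0) \<le> (\<Sum>l<L. if eps \<le> f l then 1 else (0::real))"
proof (cases "eps \<le> (MAX l\<in>{..<L}. f l)")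
  case True
  then obtain l where l: "l < L" "eps \<le> f l" using assms by (subst (asm) Max_ge_iff) auto
  have "(if eps \<le> f l then 1 else (0::real)) \<le> (\<Sum>l<L. if eps \<le> f l then 1 else (0::real))"
    by (rule member_le_sum) (use l in auto)
  then show ?thesis using True l by simp
qed (simp add: sum_nonneg)

lemma inconf_bound:
  fixes M :: nat and Bs :: "nat \<Rightarrow> pauli list" and Ps :: "nat \<Rightarrow> pauli list"
  assumes rho: "density_matrix n \<rho>" and Bs: "\<forall>m<M. Bs m \<in> bases n"
    and L: "0 < L" and Ps: "\<forall>l<L. length (Ps l) = n" and eps: "0 < eps"
  shows "INCONF n \<rho> L Ps eps M Bs \<le> (\<Sum>l<L. 2 * exp (- (eps\<^sup>2) / 2) ^ lift_count M Bs (Ps l))"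
proof -
  define Q where "Q = Pi_pmf {..<M} undefined (\<lambda>m. Dm \<rho> n (Bs m))"
  define \<Omega> where "\<Omega> = PiE {..<M} (\<lambda>_. outcomes n)"
  define W where "W ss = (\<Prod>m<M. outcome_prob \<rho> (Bs m) (ss m))" for ss
  define e where "e l ss = (eps \<le> cmod (complex_of_real (w_hat M Bs ss (Ps l)) - mtrace (pauli_op (Ps l) * \<rho>)))" for l ss
  have fin\<Omega>: "finite \<Omega>" unfolding \<Omega>_def by (intro finite_PiE) (auto simp: finite_outcomes)
  have W0: "0 \<le> W ss" if "ss \<in> \<Omega>" for ss
    unfolding W_def using that Bs by (intro prod_nonneg) (auto simp: \<Omega>_def intro!: outcome_nonneg[OF rho])
  have setQ: "set_pmf Q \<subseteq> \<Omega>" unfolding Q_def \<Omega>_def by (rule set_Pi_Dm[OF rho Bs])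
  have pmfQ: "pmf Q ss = W ss" if "ss \<in> \<Omega>" for ss
  proof -
    have "pmf Q ss = (\<Prod>m<M. pmf (Dm \<rho> n (Bs m)) (ss m))"
      using that unfolding Q_def \<Omega>_def by (subst pmf_Pi) (auto simp: PiE_def extensional_def)
    also have "\<dots> = W ss"
      unfolding W_def using that Bs by (intro prod.cong refl) (auto simp: \<Omega>_def pmf_Dm[OF rho] opdf_def)
    finally show ?thesis .
  qed
  have probQ: "measure_pmf.prob Q {ss. E ss} = (\<Sum>ss\<in>\<Omega>. W ss * (if E ss then 1 else 0))" for E
  proof -
    have "measure_pmf.prob Q {ss. E ss} = measure_pmf.prob Q ({ss. E ss} \<inter> set_pmf Q)"
      by (rule measure_Int_set_pmf[symmetric])
    also have "{ss. E ss} \<inter> set_pmf Q = (\<Omega> \<inter> {ss. E ss}) \<inter> set_pmf Q" using setQ by blast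
    also have "measure_pmf.prob Q \<dots> = measure_pmf.prob Q (\<Omega> \<inter> {ss. E ss})"
      by (rule measure_Int_set_pmf)
    also have "\<dots> = sum (pmf Q) (\<Omega> \<inter> {ss. E ss})"
      using fin\<Omega> by (intro measure_measure_pmf_finite) simp
    also have "\<dots> = (\<Sum>ss\<in>\<Omega>. if ss \<in> {ss. E ss} then pmf Q ss else 0)"
      by (rule sum.inter_restrict[OF fin\<Omega>])
    also have "\<dots> = (\<Sum>ss\<in>\<Omega>. W ss * (if E ss then 1 else 0))"
      by (intro sum.cong refl) (simp add: pmfQ)
    finally show ?thesis .
  qed
  have "INCONF n \<rho> L Ps eps M Bs = (\<Sum>ss\<in>\<Omega>. W ss * (if eps \<le> (MAX l\<in>{..<L}. cmod (complex_of_real (w_hat M Bs ss (Ps l)) - mtrace (pauli_op (Ps l) * \<rho>))) then 1 else 0))"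
    by (simp add: INCONF_def \<Omega>_def W_def)
  also have "\<dots> \<le> (\<Sum>ss\<in>\<Omega>. W ss * (\<Sum>l<L. if e l ss then 1 else 0))"
    unfolding e_def by (intro sum_mono mult_left_mono max_indicator L W0)
  also have "\<dots> = (\<Sum>l<L. \<Sum>ss\<in>\<Omega>. W ss * (if e l ss then 1 else 0))"
    by (simp add: sum_distrib_left sum.swap[of _ \<Omega>])
  also have "\<dots> = (\<Sum>l<L. measure_pmf.prob Q {ss. e l ss})"
    by (simp add: probQ)
  also have "\<dots> \<le> (\<Sum>l<L. 2 * exp (- (eps\<^sup>2) / 2) ^ lift_count M Bs (Ps l))"
    unfolding Q_def e_def using Ps by (intro sum_mono hoeff_l[OF rho Bs _ eps]) auto
  finally show ?thesis .
qed



lemma finite_bases: "finite (bases n)"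
proof -
  have "bases n = {xs. set xs \<subseteq> {PX,PY,PZ} \<and> length xs = n}" by (auto simp: bases_def)
  then show ?thesis using finite_lists_length_eq[of "{PX,PY,PZ}" n] by simp
qed

lemma Lift_sub: "Lift P \<subseteq> bases (length P)" by (auto simp: Lift_def)

lemma zeta_le1: "zeta P \<beta> \<le> 1"
proof -
  have "zeta P \<beta> = measure_pmf.prob \<beta> (Lift P)"
    unfolding zeta_def by (rule measure_measure_pmf_finite[symmetric]) (rule finite_subset[OF Lift_sub finite_bases])
  then show ?thesis by simp
qed

lemma expect_lift:
  fixes M :: nat
  assumes beta: "set_pmf \<beta> \<subseteq> bases n" and lP: "length P = n" and q: "0 \<le> q"
  shows "measure_pmf.expectation (Pi_pmf {..<M} [] (\<lambda>_. \<beta>)) (\<lambda>Bs. q ^ lift_count M Bs P)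
     = (1 - (1 - q) * zeta P \<beta>) ^ M"
proof -
  have finb: "finite (set_pmf \<beta>)" using finite_subset[OF beta finite_bases] .
  have "(\<lambda>Bs. q ^ lift_count M Bs P) = (\<lambda>Bs. \<Prod>m\<in>{..<M}. (\<lambda>m b. if b \<in> Lift P then q else 1) m (Bs m))"
    by (rule ext) (simp add: lift_count_def prod.inter_filter[symmetric])
  then have "measure_pmf.expectation (Pi_pmf {..<M} [] (\<lambda>_. \<beta>)) (\<lambda>Bs. q ^ lift_count M Bs P)
     = (\<Prod>m\<in>{..<M}. measure_pmf.expectation \<beta> (\<lambda>b. if b \<in> Lift P then q else 1))"
    by (simp only:) (rule expectation_prod_Pi_pmf, auto simp: integrable_measure_pmf_finite[OF finb] q)
  also have "measure_pmf.expectation \<beta> (\<lambda>b. if b \<in> Lift P then q else 1) = 1 - (1 - q) * zeta P \<beta>"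
  proof -
    have "measure_pmf.expectation \<beta> (\<lambda>b. if b \<in> Lift P then q else 1)
        = (\<Sum>b\<in>bases n. pmf \<beta> b *\<^sub>R (if b \<in> Lift P then q else 1))"
      by (rule integral_measure_pmf) (use beta in \<open>auto simp: finite_bases\<close>)
    also have "\<dots> = (\<Sum>b\<in>bases n. pmf \<beta> b) - (1 - q) * (\<Sum>b\<in>bases n. if b \<in> Lift P then pmf \<beta> b else 0)"
      by (simp add: sum_distrib_left sum_subtractf[symmetric] algebra_simps if_distrib cong: if_cong)
    also have "(\<Sum>b\<in>bases n. pmf \<beta> b) = 1"
      by (rule sum_pmf_eq_1[OF finite_bases beta])
    also have "(\<Sum>b\<in>bases n. if b \<in> Lift P then pmf \<beta> b else 0) = (\<Sum>b\<in>bases n \<inter> Lift P. pmf \<beta> b)"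
      by (rule sum.inter_restrict[OF finite_bases, symmetric])
    also have "bases n \<inter> Lift P = Lift P" using Lift_sub[of P] lP by blast
    finally show ?thesis by (simp add: zeta_def)
  qed
  finally show ?thesis by simp
qed


theorem mainTheorem5:
  fixes n L M :: nat and \<rho> :: "complex mat" and Ps :: "nat \<Rightarrow> pauli list"
    and \<beta> :: "pauli list pmf" and eps delta eta :: real
  assumes rho: "density_matrix n \<rho>"
    and L: "0 < L"
    and Ps: "\<forall>l<L. length (Ps l) = n"
    and beta: "set_pmf \<beta> \<subseteq> bases n"
    and zeta_pos: "\<forall>l<L. zeta (Ps l) \<beta> > 0"
    and eps_bd: "0 < eps" "eps < 1"
    and delta_bd: "0 < delta" "delta < 1"
    and eta_def: "eta = 1 - exp (- (eps\<^sup>2) / 2)"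
  shows "measure_pmf.expectation (Pi_pmf {..<M} [] (\<lambda>_. \<beta>)) (INCONF n \<rho> L Ps eps M)
           \<le> 2 * (\<Sum>l<L. (1 - eta * zeta (Ps l) \<beta>) ^ M)
         \<and> 2 * (\<Sum>l<L. (1 - eta * zeta (Ps l) \<beta>) ^ M) \<le> 2 * (\<Sum>l<L. exp (- eta * zeta (Ps l) \<beta> * real M))
         \<and> (real M \<ge> ln (2 * real L / delta) / eta * (MAX l\<in>{..<L}. 1 / zeta (Ps l) \<beta>) \<longrightarrow>
              measure_pmf.expectation (Pi_pmf {..<M} [] (\<lambda>_. \<beta>)) (INCONF n \<rho> L Ps eps M) \<le> delta)"
proof -
  define q where "q = exp (- (eps\<^sup>2) / 2)"
  define R where "R = Pi_pmf {..<M} [] (\<lambda>_. \<beta>)"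
  have eta_q: "eta = 1 - q" by (simp add: eta_def q_def)
  have q0: "0 < q" by (simp add: q_def)
  have q1: "q < 1" using eps_bd by (simp add: q_def)
  have finb: "finite (set_pmf \<beta>)" using finite_subset[OF beta finite_bases] .
  have setR: "set_pmf R = PiE_dflt {..<M} [] (\<lambda>_. set_pmf \<beta>)"
    unfolding R_def by (subst set_Pi_pmf) (auto simp: comp_def)
  have finR: "finite (set_pmf R)" unfolding setR using finb by auto
  have BsR: "\<forall>m<M. Bs m \<in> bases n" if "Bs \<in> set_pmf R" for Bs
    using that beta unfolding setR by (auto simp: PiE_dflt_def)
  have A: "measure_pmf.expectation R (INCONF n \<rho> L Ps eps M)
           \<le> 2 * (\<Sum>l<L. (1 - eta * zeta (Ps l) \<beta>) ^ M)"
  proof -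
    have "measure_pmf.expectation R (INCONF n \<rho> L Ps eps M)
        \<le> measure_pmf.expectation R (\<lambda>Bs. \<Sum>l<L. 2 * q ^ lift_count M Bs (Ps l))"
      by (intro integral_mono_AE integrable_measure_pmf_finite[OF finR] AE_pmfI)
         (unfold q_def, rule inconf_bound[OF rho BsR L Ps eps_bd(1)])
    also have "\<dots> = (\<Sum>l<L. 2 * measure_pmf.expectation R (\<lambda>Bs. q ^ lift_count M Bs (Ps l)))"
      by (simp add: integrable_measure_pmf_finite[OF finR])
    also have "\<dots> = (\<Sum>l<L. 2 * (1 - eta * zeta (Ps l) \<beta>) ^ M)"
      unfolding R_def eta_q using Ps q0
      by (intro sum.cong refl) (simp add: expect_lift[OF beta])
    finally show ?thesis by (simp add: sum_distrib_left)
  qed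
  have B: "2 * (\<Sum>l<L. (1 - eta * zeta (Ps l) \<beta>) ^ M) \<le> 2 * (\<Sum>l<L. exp (- eta * zeta (Ps l) \<beta> * real M))"
  proof -
    have "(1 - eta * zeta (Ps l) \<beta>) ^ M \<le> exp (- eta * zeta (Ps l) \<beta> * real M)" if l: "l < L" for l
    proof -
      have z: "0 < zeta (Ps l) \<beta>" "zeta (Ps l) \<beta> \<le> 1" using zeta_pos l zeta_le1 by auto
      have e: "0 < eta" "eta < 1" using q0 q1 eta_q by auto
      have "0 \<le> eta * zeta (Ps l) \<beta>" "eta * zeta (Ps l) \<beta> \<le> 1"
        using z e by (auto intro: mult_le_one)
      then have "(1 - eta * zeta (Ps l) \<beta>) ^ M \<le> exp (- (eta * zeta (Ps l) \<beta>)) ^ M"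
        using exp_ge_add_one_self[of "- (eta * zeta (Ps l) \<beta>)"] by (intro power_mono) auto
      also have "\<dots> = exp (- eta * zeta (Ps l) \<beta> * real M)"
        by (simp add: exp_of_nat2_mult[symmetric])
      finally show ?thesis .
    qed
    then show ?thesis by (intro mult_left_mono sum_mono) auto
  qed
  have C: "measure_pmf.expectation R (INCONF n \<rho> L Ps eps M) \<le> delta"
    if M: "real M \<ge> ln (2 * real L / delta) / eta * (MAX l\<in>{..<L}. 1 / zeta (Ps l) \<beta>)"
  proof -
    have e: "0 < eta" using q1 eta_q by auto
    have lnpos: "0 < ln (2 * real L / delta)" using L delta_bd by (simp add: ln_gt_zero_iff field_simps)
    have "exp (- eta * zeta (Ps l) \<beta> * real M) \<le> delta / (2 * real L)" if l: "l < L" for l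
    proof -
      have z: "0 < zeta (Ps l) \<beta>" using zeta_pos l by auto
      have "1 / zeta (Ps l) \<beta> \<le> (MAX l\<in>{..<L}. 1 / zeta (Ps l) \<beta>)"
        using l by (intro Max_ge) auto
      then have "ln (2 * real L / delta) / eta * (1 / zeta (Ps l) \<beta>) \<le> real M"
        using M lnpos e by (smt (verit) divide_pos_pos mult_left_mono)
      then have "ln (2 * real L / delta) \<le> eta * zeta (Ps l) \<beta> * real M"
        using e z by (simp add: field_simps)
      then have "exp (- eta * zeta (Ps l) \<beta> * real M) \<le> exp (- ln (2 * real L / delta))"
        by simp
      also have "\<dots> = delta / (2 * real L)"
        using L delta_bd by (simp add: exp_minus inverse_eq_divide)
      finally show ?thesis .
    qed
    then have "(\<Sum>l<L. exp (- eta * zeta (Ps l) \<beta> * real M)) \<le> (\<Sum>l<L. delta / (2 * real L))"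
      by (intro sum_mono) auto
    also have "\<dots> = delta / 2" using L by simp
    finally have "2 * (\<Sum>l<L. exp (- eta * zeta (Ps l) \<beta> * real M)) \<le> delta" by simp
    then show ?thesis using A B by linarith
  qed
  show ?thesis using A B C unfolding R_def by blast
qed

end
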